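(* Let $E\subset[0,1]$ with $[0,1]\setminus E$ finite. For each $n$ let $R_n$ be a random closed set with $R_n\subset\{0,\dots,n\}/n$ a.s., with i.i.d. copies $\{R_{n,j}\}_{j\in\mathbb N}$, and assume there is $c_0>0$ such that for every $G\in\mathcal G_0$ there is $C$ with $\max_{k/n\in G}\mathbb P(k/n\in R_n)\le Cn^{-c_0}$ for all $n$. Let $\{X_j\}$ be i.i.d., independent of all $R_{n,j}$, with $\mathbb P(|X_1|>x)=x^{-\alpha}L(x)$, $\alpha>0$, $L$ slowly varying, and $\mathbb P(X_1>x)/\mathbb P(|X_1|>x)\to\mathsf p\in(0,1]$; let $m_n$ be increasing positive integers with $m_n\to\infty$ and $a_n$ with $m_n\mathbb P(X_1>a_n)\to1$. Let $X_{1:m_n},\dots,X_{m_n:m_n}$ be the reordering of $X_1,\dots,X_{m_n}$ with $|X_{1:m_n}|\ge\dots\ge|X_{m_n:m_n}|$, $\sigma_n$ the permutation with $X_{\sigma_n(j)}=X_{j:m_n}$, $\hat R_{n,j}=R_{n,\sigma_n(j)}$ and $\hat J_{n,k}=\{j\le m_n: k/n\in\hat R_{n,j}\}$. Let $\gamma\in(0,c_0/\alpha)$, $\delta_n=n^{-\gamma}$ and $$Z_{n,\ell}(k)=\sum_{j\in\hat J_{n,k}\setminus[\ell]}X_{j:m_n}\mathbf 1\{|X_{j:m_n}|/a_n>\delta_n\}$$ (empty sum $=0$). Then $$\lim_{\ell\to\infty}\limsup_{n\to\infty}\mathbb P\Big(\frac1{a_n}\max_{k/n\in G}|Z_{n,\ell}(k)|>\epsilon\Big)=0\quad\text{for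 all }\epsilon>0,\ G\in\mathcal G_0.$$
   Context: $[\ell]=\{1,\dots,\ell\}$; $\mathcal G_0=\{(a,b):[a,b]\subset E\}$; the maximum is over $k\in\{0,\dots,n\}$ with $k/n\in G$. *)

theory Defs
  imports "HOL-Probability.Probability"
begin

text \<open>A subset R of the grid {0,...,n}/n is encoded by the set of integers k with k/n in R.\<close>
definition set_space :: "nat set measure" where
  "set_space = sigma UNIV (range (\<lambda>k. {A. k \<in> A}))"

definition slowly_varying :: "(real \<Rightarrow> real) \<Rightarrow> bool" where
  "slowly_varying L \<longleftrightarrow> (\<forall>\<^sub>F x in at_top. L x > 0) \<and>
     (\<forall>t>0. ((\<lambda>x. L (t * x) / L x) \<longlongrightarrow> 1) at_top)"

text \<open>The indices 1..m sorted so that |X_j| is non-increasing (stable: ties broken by index).\<close>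
definition order_list :: "(nat \<Rightarrow> 'a \<Rightarrow> real) \<Rightarrow> nat \<Rightarrow> 'a \<Rightarrow> nat list" where
  "order_list X m \<omega> = sort_key (\<lambda>j. - \<bar>X j \<omega>\<bar>) [1..<Suc m]"

text \<open>sigma_n(j): the index with X_{sigma_n(j)} = X_{j:m}, for 1 <= j <= m.\<close>
definition order_perm :: "(nat \<Rightarrow> 'a \<Rightarrow> real) \<Rightarrow> nat \<Rightarrow> 'a \<Rightarrow> nat \<Rightarrow> nat" where
  "order_perm X m \<omega> j = order_list X m \<omega> ! (j - 1)"

definition Zsum :: "(nat \<Rightarrow> 'a \<Rightarrow> real) \<Rightarrow> (nat \<Rightarrow> nat \<Rightarrow> 'a \<Rightarrow> nat set) \<Rightarrow> (nat \<Rightarrow> nat)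
    \<Rightarrow> (nat \<Rightarrow> real) \<Rightarrow> real \<Rightarrow> nat \<Rightarrow> nat \<Rightarrow> nat \<Rightarrow> 'a \<Rightarrow> real" where
  "Zsum X R m a \<gamma> n l k \<omega> =
    (let \<sigma> = order_perm X (m n) \<omega>;
         Jhat = {j \<in> {1..m n}. k \<in> R n (\<sigma> j) \<omega>}
     in \<Sum>j \<in> Jhat - {1..l}. X (\<sigma> j) \<omega> *
          (if \<bar>X (\<sigma> j) \<omega>\<bar> / a n > real n powr (-\<gamma>) then 1 else 0))"

end

theory Submission
  imports Defs
begin


lemma order_perm_facts:
  fixes X :: "nat \<Rightarrow> 'a \<Rightarrow> real" and m :: nat and \<omega> :: 'a
  defines "\<sigma> \<equiv> order_perm X m \<omega>"
  shows "\<And>j. j \<in> {1..m} \<Longrightarrow> \<sigma> j \<in> {1..m}"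
    and "inj_on \<sigma> {1..m}"
    and "\<And>i j. 1 \<le> i \<Longrightarrow> i \<le> j \<Longrightarrow> j \<le> m \<Longrightarrow> \<bar>X (\<sigma> j) \<omega>\<bar> \<le> \<bar>X (\<sigma> i) \<omega>\<bar>"
proof -
  define xs where "xs = order_list X m \<omega>"
  have len: "length xs = m" unfolding xs_def order_list_def by simp
  have set: "set xs = {1..m}" unfolding xs_def order_list_def by auto
  have dist: "distinct xs" unfolding xs_def order_list_def by simp
  have sor: "sorted (map (\<lambda>j. - \<bar>X j \<omega>\<bar>) xs)" unfolding xs_def order_list_def
    by (rule sorted_sort_key)
  have sig: "\<sigma> j = xs ! (j - 1)" for j unfolding \<sigma>_def order_perm_def xs_def by simp
  show "\<And>j. j \<in> {1..m} \<Longrightarrow> \<sigma> j \<in> {1..m}"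
  proof -
    fix j assume "j \<in> {1..m}"
    then have "j - 1 < length xs" using len by auto
    then show "\<sigma> j \<in> {1..m}" unfolding sig using set nth_mem by blast
  qed
  show "inj_on \<sigma> {1..m}"
  proof
    fix i j assume "i \<in> {1..m}" "j \<in> {1..m}" "\<sigma> i = \<sigma> j"
    then have "xs ! (i - 1) = xs ! (j - 1)" "i - 1 < length xs" "j - 1 < length xs"
      using len sig by auto
    then have "i - 1 = j - 1" using dist nth_eq_iff_index_eq by blast
    then show "i = j" using \<open>i \<in> {1..m}\<close> \<open>j \<in> {1..m}\<close> by auto
  qed
  show "\<And>i j. 1 \<le> i \<Longrightarrow> i \<le> j \<Longrightarrow> j \<le> m \<Longrightarrow> \<bar>X (\<sigma> j) \<omega>\<bar> \<le> \<bar>X (\<sigma> i) \<omega>\<bar>"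
  proof -
    fix i j :: nat assume "1 \<le> i" "i \<le> j" "j \<le> m"
    then have "map (\<lambda>j. - \<bar>X j \<omega>\<bar>) xs ! (i - 1) \<le> map (\<lambda>j. - \<bar>X j \<omega>\<bar>) xs ! (j - 1)"
      using sorted_nth_mono[OF sor, of "i - 1" "j - 1"] len by auto
    then show "\<bar>X (\<sigma> j) \<omega>\<bar> \<le> \<bar>X (\<sigma> i) \<omega>\<bar>" using len \<open>i \<le> j\<close> \<open>j \<le> m\<close> \<open>1 \<le> i\<close>
      by (simp add: sig)
  qed
qed

lemma Zsum_bound:
  fixes X :: "nat \<Rightarrow> 'a \<Rightarrow> real"
  assumes apos: "a n > 0" and c: "c \<ge> 0"
  and A: "card {i\<in>{1..m n}. c * a n < \<bar>X i \<omega>\<bar>} \<le> l"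
  and B: "card {i\<in>{1..m n}. \<bar>X i \<omega>\<bar> / a n > real n powr (-\<gamma>) \<and> k \<in> R n i \<omega>} \<le> r"
  shows "\<bar>Zsum X R m a \<gamma> n l k \<omega>\<bar> \<le> real r * (c * a n)"
proof -
  define \<sigma> where "\<sigma> = order_perm X (m n) \<omega>"
  note F = order_perm_facts[where X=X and m="m n" and \<omega>=\<omega>, folded \<sigma>_def]
  define J' where "J' = {j\<in>{1..m n}. k \<in> R n (\<sigma> j) \<omega>} - {1..l}"
  define P where "P j \<longleftrightarrow> \<bar>X (\<sigma> j) \<omega>\<bar> / a n > real n powr (-\<gamma>)" for j
  have Z: "Zsum X R m a \<gamma> n l k \<omega> = (\<Sum>j\<in>J'. X (\<sigma> j) \<omega> * (if P j then 1 else 0))"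
    unfolding Zsum_def Let_def J'_def P_def \<sigma>_def by simp
  have finJ: "finite J'" unfolding J'_def by auto
  have key: "\<bar>X (\<sigma> j) \<omega>\<bar> \<le> c * a n" if j: "j \<in> J'" for j
  proof (rule ccontr)
    assume "\<not> ?thesis"
    then have big: "c * a n < \<bar>X (\<sigma> j) \<omega>\<bar>" by simp
    have jr: "1 \<le> j" "j \<le> m n" "l < j" using j unfolding J'_def by auto
    have sub: "\<sigma> ` {1..j} \<subseteq> {i\<in>{1..m n}. c * a n < \<bar>X i \<omega>\<bar>}"
    proof
      fix x assume "x \<in> \<sigma> ` {1..j}"
      then obtain i where i: "i \<in> {1..j}" "x = \<sigma> i" by auto
      have "\<bar>X (\<sigma> j) \<omega>\<bar> \<le> \<bar>X (\<sigma> i) \<omega>\<bar>" using F(3)[of i j] i jr by auto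
      moreover have "\<sigma> i \<in> {1..m n}" using F(1)[of i] i jr by auto
      ultimately show "x \<in> {i\<in>{1..m n}. c * a n < \<bar>X i \<omega>\<bar>}" using big i by auto
    qed
    have "inj_on \<sigma> {1..j}" using jr by (intro inj_on_subset[OF F(2)]) auto
    then have "card (\<sigma> ` {1..j}) = j" by (simp add: card_image)
    moreover have "card (\<sigma> ` {1..j}) \<le> card {i\<in>{1..m n}. c * a n < \<bar>X i \<omega>\<bar>}"
      by (rule card_mono[OF _ sub]) auto
    ultimately show False using A jr by linarith
  qed
  have "\<bar>Zsum X R m a \<gamma> n l k \<omega>\<bar> \<le> (\<Sum>j\<in>J'. \<bar>X (\<sigma> j) \<omega> * (if P j then 1 else 0)\<bar>)"
    unfolding Z by (rule sum_abs)
  also have "\<dots> \<le> (\<Sum>j\<in>J'. (if P j then c * a n else 0))"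
    by (rule sum_mono) (use key in auto)
  also have "\<dots> = real (card {j\<in>J'. P j}) * (c * a n)"
    using finJ by (simp add: sum.If_cases Int_def)
  also have "\<dots> \<le> real r * (c * a n)"
  proof -
    have "inj_on \<sigma> {j\<in>J'. P j}" by (intro inj_on_subset[OF F(2)]) (auto simp: J'_def)
    moreover have "\<sigma> ` {j\<in>J'. P j} \<subseteq> {i\<in>{1..m n}. \<bar>X i \<omega>\<bar> / a n > real n powr (-\<gamma>) \<and> k \<in> R n i \<omega>}"
      using F(1) by (auto simp: J'_def P_def)
    ultimately have "card {j\<in>J'. P j} \<le> card {i\<in>{1..m n}. \<bar>X i \<omega>\<bar> / a n > real n powr (-\<gamma>) \<and> k \<in> R n i \<omega>}"
      by (intro card_inj_on_le) auto
    then have "card {j\<in>J'. P j} \<le> r" using B by linarith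
    then show ?thesis using apos c by (intro mult_right_mono) auto
  qed
  finally show ?thesis .
qed



lemma subsets_union_bound:
  assumes M: "prob_space M" and fin: "finite I" and q: "q \<ge> 1"
  and meas: "\<And>i. i \<in> I \<Longrightarrow> A i \<in> sets M"
  and prod: "\<And>S. S \<subseteq> I \<Longrightarrow> card S = q \<Longrightarrow> measure M (\<Inter>i\<in>S. A i) \<le> b"
  shows "measure M (\<Union>S\<in>{S. S \<subseteq> I \<and> card S = q}. \<Inter>i\<in>S. A i) \<le> real (card I choose q) * b"
    and "(\<Union>S\<in>{S. S \<subseteq> I \<and> card S = q}. \<Inter>i\<in>S. A i) \<in> sets M"
proof -
  interpret prob_space M by (rule M)
  have finS: "finite {S. S \<subseteq> I \<and> card S = q}" using fin by auto
  have inS: "(\<Inter>i\<in>S. A i) \<in> sets M" if "S \<in> {S. S \<subseteq> I \<and> card S = q}" for S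
  proof -
    have "S \<noteq> {}" "finite S" using that q fin finite_subset by fastforce+
    then show ?thesis using that meas by (intro sets.finite_INT) auto
  qed
  then show "(\<Union>S\<in>{S. S \<subseteq> I \<and> card S = q}. \<Inter>i\<in>S. A i) \<in> sets M"
    using finS by (intro sets.finite_UN) auto
  have "measure M (\<Union>S\<in>{S. S \<subseteq> I \<and> card S = q}. \<Inter>i\<in>S. A i)
      \<le> (\<Sum>S\<in>{S. S \<subseteq> I \<and> card S = q}. measure M (\<Inter>i\<in>S. A i))"
    using finS inS by (intro finite_measure_subadditive_finite) auto
  also have "\<dots> \<le> (\<Sum>S\<in>{S. S \<subseteq> I \<and> card S = q}. b)"
    by (rule sum_mono) (use prod in auto)
  also have "\<dots> = real (card I choose q) * b" using n_subsets[OF fin, of q] by simp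
  finally show "measure M (\<Union>S\<in>{S. S \<subseteq> I \<and> card S = q}. \<Inter>i\<in>S. A i) \<le> real (card I choose q) * b" .
qed

lemma in_subsets_union:
  assumes "finite I" "q \<le> card {i\<in>I. \<omega> \<in> A i}" "q \<ge> 1"
  shows "\<omega> \<in> (\<Union>S\<in>{S. S \<subseteq> I \<and> card S = q}. \<Inter>i\<in>S. A i)"
proof -
  obtain T where "T \<subseteq> {i\<in>I. \<omega> \<in> A i}" "card T = q" "finite T"
    using obtain_subset_with_card_n[OF assms(2)] by blast
  then show ?thesis by auto
qed

lemma borel_abs_gt: "{x::real. t < \<bar>x\<bar>} \<in> sets borel"
  by measurable

lemma set_space_pt: "{A. k \<in> A} \<in> sets set_space"
  unfolding set_space_def by (subst sets_measure_of) auto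

lemma X_prob_eq:
  fixes X :: "nat \<Rightarrow> 'a \<Rightarrow> real"
  assumes M: "prob_space M"
    and X_indep: "prob_space.indep_vars M (\<lambda>_. borel) X {1..}"
    and X_ident: "\<And>j. j \<ge> 1 \<Longrightarrow> distr M borel (X j) = distr M borel (X 1)"
    and i: "i \<ge> 1"
  shows "measure M {\<omega>\<in>space M. t < \<bar>X i \<omega>\<bar>} = measure M {\<omega>\<in>space M. t < \<bar>X 1 \<omega>\<bar>}"
proof -
  have mi: "X j \<in> borel_measurable M" if "j \<ge> 1" for j
    using X_indep that by (auto simp: prob_space.indep_vars_def[OF M])
  have "measure M {\<omega>\<in>space M. t < \<bar>X i \<omega>\<bar>} = measure (distr M borel (X i)) {x. t < \<bar>x\<bar>}"
    by (subst measure_distr[OF mi[OF i] borel_abs_gt]) (auto intro!: arg_cong[where f="measure M"])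
  also have "\<dots> = measure (distr M borel (X 1)) {x. t < \<bar>x\<bar>}" using X_ident[OF i] by simp
  also have "\<dots> = measure M {\<omega>\<in>space M. t < \<bar>X 1 \<omega>\<bar>}"
    by (subst measure_distr[OF mi[OF order_refl] borel_abs_gt]) (auto intro!: arg_cong[where f="measure M"])
  finally show ?thesis .
qed

lemma R_prob_eq:
  fixes R :: "nat \<Rightarrow> nat \<Rightarrow> 'a \<Rightarrow> nat set"
  assumes M: "prob_space M"
    and R_indep: "prob_space.indep_vars M (\<lambda>_. set_space) (R n) {1..}"
    and R_ident: "\<And>j. j \<ge> 1 \<Longrightarrow> distr M set_space (R n j) = distr M set_space (R n 1)"
    and i: "i \<ge> 1"
  shows "measure M {\<omega>\<in>space M. k \<in> R n i \<omega>} = measure M {\<omega>\<in>space M. k \<in> R n 1 \<omega>}"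
proof -
  have mi: "R n j \<in> measurable M set_space" if "j \<ge> 1" for j
    using R_indep that by (auto simp: prob_space.indep_vars_def[OF M])
  have "measure M {\<omega>\<in>space M. k \<in> R n i \<omega>} = measure (distr M set_space (R n i)) {A. k \<in> A}"
    by (subst measure_distr[OF mi[OF i] set_space_pt]) (auto intro!: arg_cong[where f="measure M"])
  also have "\<dots> = measure (distr M set_space (R n 1)) {A. k \<in> A}" using R_ident[OF i] by simp
  also have "\<dots> = measure M {\<omega>\<in>space M. k \<in> R n 1 \<omega>}"
    by (subst measure_distr[OF mi[OF order_refl] set_space_pt]) (auto intro!: arg_cong[where f="measure M"])
  finally show ?thesis .
qed

lemma X_prod:
  fixes X :: "nat \<Rightarrow> 'a \<Rightarrow> real"
  assumes M: "prob_space M"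
    and X_indep: "prob_space.indep_vars M (\<lambda>_. borel) X {1..}"
    and X_ident: "\<And>j. j \<ge> 1 \<Longrightarrow> distr M borel (X j) = distr M borel (X 1)"
    and S: "S \<subseteq> {1..}" "finite S" "S \<noteq> {}"
  shows "measure M (\<Inter>i\<in>S. {\<omega>\<in>space M. t < \<bar>X i \<omega>\<bar>}) = measure M {\<omega>\<in>space M. t < \<bar>X 1 \<omega>\<bar>} ^ card S"
proof -
  have ind: "prob_space.indep_sets M (\<lambda>i. sigma_sets (space M) {X i -` A \<inter> space M |A. A \<in> sets borel}) {1..}"
    using X_indep by (simp add: prob_space.indep_vars_def[OF M])
  have "measure M (\<Inter>i\<in>S. {\<omega>\<in>space M. t < \<bar>X i \<omega>\<bar>}) = (\<Prod>i\<in>S. measure M {\<omega>\<in>space M. t < \<bar>X i \<omega>\<bar>})"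
  proof (rule prob_space.indep_setsD[OF M ind S(1) S(3) S(2)], intro ballI)
    fix j assume "j \<in> S"
    have "{\<omega>\<in>space M. t < \<bar>X j \<omega>\<bar>} = X j -` {x. t < \<bar>x\<bar>} \<inter> space M" by auto
    also have "\<dots> \<in> sigma_sets (space M) {X j -` A \<inter> space M |A. A \<in> sets borel}"
      using borel_abs_gt by (intro sigma_sets.Basic) blast
    finally show "{\<omega>\<in>space M. t < \<bar>X j \<omega>\<bar>} \<in> sigma_sets (space M) {X j -` A \<inter> space M |A. A \<in> sets borel}" .
  qed
  also have "\<dots> = (\<Prod>i\<in>S. measure M {\<omega>\<in>space M. t < \<bar>X 1 \<omega>\<bar>})"
    using S(1) by (intro prod.cong refl X_prob_eq[OF M X_indep X_ident]) auto
  finally show ?thesis by simp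
qed

lemma R_prod:
  fixes R :: "nat \<Rightarrow> nat \<Rightarrow> 'a \<Rightarrow> nat set"
  assumes M: "prob_space M"
    and R_indep: "prob_space.indep_vars M (\<lambda>_. set_space) (R n) {1..}"
    and R_ident: "\<And>j. j \<ge> 1 \<Longrightarrow> distr M set_space (R n j) = distr M set_space (R n 1)"
    and S: "S \<subseteq> {1..}" "finite S" "S \<noteq> {}"
  shows "measure M (\<Inter>i\<in>S. {\<omega>\<in>space M. k \<in> R n i \<omega>}) = measure M {\<omega>\<in>space M. k \<in> R n 1 \<omega>} ^ card S"
proof -
  have ind: "prob_space.indep_sets M (\<lambda>i. sigma_sets (space M) {R n i -` A \<inter> space M |A. A \<in> sets set_space}) {1..}"
    using R_indep by (simp add: prob_space.indep_vars_def[OF M])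
  have "measure M (\<Inter>i\<in>S. {\<omega>\<in>space M. k \<in> R n i \<omega>}) = (\<Prod>i\<in>S. measure M {\<omega>\<in>space M. k \<in> R n i \<omega>})"
  proof (rule prob_space.indep_setsD[OF M ind S(1) S(3) S(2)], intro ballI)
    fix j assume "j \<in> S"
    have "{\<omega>\<in>space M. k \<in> R n j \<omega>} = R n j -` {A. k \<in> A} \<inter> space M" by auto
    also have "\<dots> \<in> sigma_sets (space M) {R n j -` A \<inter> space M |A. A \<in> sets set_space}"
      using set_space_pt by (intro sigma_sets.Basic) blast
    finally show "{\<omega>\<in>space M. k \<in> R n j \<omega>} \<in> sigma_sets (space M) {R n j -` A \<inter> space M |A. A \<in> sets set_space}" .
  qed
  also have "\<dots> = (\<Prod>i\<in>S. measure M {\<omega>\<in>space M. k \<in> R n 1 \<omega>})"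
    using S(1) by (intro prod.cong refl R_prob_eq[where R=R and n=n, OF M R_indep R_ident]) auto
  finally show ?thesis by simp
qed

lemma XR_prod:
  fixes X :: "nat \<Rightarrow> 'a \<Rightarrow> real" and R :: "nat \<Rightarrow> nat \<Rightarrow> 'a \<Rightarrow> nat set"
  assumes M: "prob_space M"
    and X_indep: "prob_space.indep_vars M (\<lambda>_. borel) X {1..}"
    and X_ident: "\<And>j. j \<ge> 1 \<Longrightarrow> distr M borel (X j) = distr M borel (X 1)"
    and R_indep: "prob_space.indep_vars M (\<lambda>_. set_space) (R n) {1..}"
    and R_ident: "\<And>j. j \<ge> 1 \<Longrightarrow> distr M set_space (R n j) = distr M set_space (R n 1)"
    and XR_indep: "prob_space.indep_set M
        (sigma_sets (space M) (\<Union>j\<in>{1..}. {X j -` A \<inter> space M | A. A \<in> sets borel}))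
        (sigma_sets (space M) (\<Union>n. \<Union>j\<in>{1..}. {R n j -` A \<inter> space M | A. A \<in> sets set_space}))"
    and S: "S \<subseteq> {1..}" "finite S" "S \<noteq> {}"
  shows "measure M (\<Inter>i\<in>S. {\<omega>\<in>space M. t < \<bar>X i \<omega>\<bar>} \<inter> {\<omega>\<in>space M. k \<in> R n i \<omega>})
      = (measure M {\<omega>\<in>space M. t < \<bar>X 1 \<omega>\<bar>} * measure M {\<omega>\<in>space M. k \<in> R n 1 \<omega>}) ^ card S"
proof -
  define GX where "GX = (\<Union>j\<in>{1..}. {X j -` A \<inter> space M | A. A \<in> sets borel})"
  define GR where "GR = (\<Union>n. \<Union>j\<in>{1..}. {R n j -` A \<inter> space M | A. A \<in> sets set_space})"
  have GXp: "GX \<subseteq> Pow (space M)" unfolding GX_def by auto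
  have GRp: "GR \<subseteq> Pow (space M)" unfolding GR_def by auto
  have "(\<Inter>i\<in>S. {\<omega>\<in>space M. t < \<bar>X i \<omega>\<bar>}) \<in> sets (measure_of (space M) GX (\<lambda>_. 0))"
  proof (intro sets.finite_INT S)
    fix i assume "i \<in> S"
    have "{\<omega>\<in>space M. t < \<bar>X i \<omega>\<bar>} = X i -` {x. t < \<bar>x\<bar>} \<inter> space M" by auto
    also have "\<dots> \<in> GX" unfolding GX_def using borel_abs_gt \<open>i \<in> S\<close> S(1) by blast
    finally show "{\<omega>\<in>space M. t < \<bar>X i \<omega>\<bar>} \<in> sets (measure_of (space M) GX (\<lambda>_. 0))"
      using GXp by (auto simp: sets_measure_of intro: sigma_sets.Basic)
  qed
  then have inX: "(\<Inter>i\<in>S. {\<omega>\<in>space M. t < \<bar>X i \<omega>\<bar>}) \<in> sigma_sets (space M) GX"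
    using GXp by (simp add: sets_measure_of)
  have "(\<Inter>i\<in>S. {\<omega>\<in>space M. k \<in> R n i \<omega>}) \<in> sets (measure_of (space M) GR (\<lambda>_. 0))"
  proof (intro sets.finite_INT S)
    fix i assume "i \<in> S"
    have "{\<omega>\<in>space M. k \<in> R n i \<omega>} = R n i -` {A. k \<in> A} \<inter> space M" by auto
    also have "\<dots> \<in> GR" unfolding GR_def using set_space_pt \<open>i \<in> S\<close> S(1) by blast
    finally show "{\<omega>\<in>space M. k \<in> R n i \<omega>} \<in> sets (measure_of (space M) GR (\<lambda>_. 0))"
      using GRp by (auto simp: sets_measure_of intro: sigma_sets.Basic)
  qed
  then have inR: "(\<Inter>i\<in>S. {\<omega>\<in>space M. k \<in> R n i \<omega>}) \<in> sigma_sets (space M) GR"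
    using GRp by (simp add: sets_measure_of)
  have eq: "(\<Inter>i\<in>S. {\<omega>\<in>space M. t < \<bar>X i \<omega>\<bar>} \<inter> {\<omega>\<in>space M. k \<in> R n i \<omega>})
     = (\<Inter>i\<in>S. {\<omega>\<in>space M. t < \<bar>X i \<omega>\<bar>}) \<inter> (\<Inter>i\<in>S. {\<omega>\<in>space M. k \<in> R n i \<omega>})"
    using S(3) by auto
  show ?thesis
    unfolding eq
    apply (subst prob_space.indep_setD[OF M XR_indep[folded GX_def GR_def] inX inR])
    apply (simp add: X_prod[OF M X_indep X_ident S] R_prod[where R=R and n=n, OF M R_indep R_ident S] power_mult_distrib)
    done
qed



lemma exists_pow2_between:
  fixes t :: real assumes "t \<ge> 1"
  shows "\<exists>i::nat. t \<le> 2 ^ i \<and> 2 ^ i < 2 * t"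
proof -
  obtain n :: nat where "t < 2 ^ n" using real_arch_pow[of 2 t] by auto
  then have ex: "\<exists>i::nat. t \<le> 2 ^ i" by (intro exI[of _ n]) auto
  define i where "i = (LEAST i::nat. t \<le> 2 ^ i)"
  have i1: "t \<le> 2 ^ i" unfolding i_def by (rule LeastI_ex[OF ex])
  show ?thesis
  proof (cases i)
    case 0 then show ?thesis using i1 assms by (intro exI[of _ i]) auto
  next
    case (Suc j)
    have "\<not> t \<le> 2 ^ j" using Suc unfolding i_def
      by (metis Suc_n_not_le_n Least_le i_def)
    then show ?thesis using i1 Suc by (intro exI[of _ i]) auto
  qed
qed

lemma pow_powr2: "((2::real) powr \<beta>) ^ i = (2 ^ i) powr \<beta>"
  by (simp add: powr_realpow[symmetric] powr_powr powr_power mult.commute)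

lemma potter:
  fixes G L :: "real \<Rightarrow> real" and \<alpha> \<beta> :: real
  assumes anti: "\<And>x y. x \<le> y \<Longrightarrow> G y \<le> G x"
    and G1: "\<And>x. G x \<le> 1"
    and tail: "\<And>x. x > 0 \<Longrightarrow> G x = x powr (- \<alpha>) * L x"
    and L: "slowly_varying L"
    and ab: "\<alpha> < \<beta>" "0 < \<alpha>"
  shows "\<exists>K x0. x0 > 0 \<and> K > 0 \<and> (\<forall>x\<ge>x0. \<forall>\<delta>. 0 < \<delta> \<and> \<delta> \<le> 1 \<longrightarrow> G (\<delta> * x) \<le> K * \<delta> powr (-\<beta>) * G x)"
proof -
  have Lpos: "\<forall>\<^sub>F x in at_top. L x > 0" using L unfolding slowly_varying_def by auto
  have Lrat: "((\<lambda>x. L (2 * x) / L x) \<longlongrightarrow> 1) at_top" using L unfolding slowly_varying_def by auto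
  have lim: "((\<lambda>x. 2 powr (-\<alpha>) * (L (2 * x) / L x)) \<longlongrightarrow> 2 powr (-\<alpha>) * 1) at_top"
    by (intro tendsto_intros Lrat)
  have "2 powr (-\<beta>) < 2 powr (-\<alpha>) * 1" using ab by simp
  then have ev1: "\<forall>\<^sub>F x in at_top. 2 powr (-\<beta>) < 2 powr (-\<alpha>) * (L (2 * x) / L x)"
    using lim order_tendstoD(1) by blast
  have "\<forall>\<^sub>F x in at_top. x > 0 \<and> G x > 0 \<and> 2 powr (-\<beta>) * G x \<le> G (2 * x)"
    using ev1 Lpos eventually_gt_at_top[of 0]
  proof eventually_elim
    case (elim x)
    have Gx: "G x = x powr (-\<alpha>) * L x" using tail elim by auto
    have G2x: "G (2 * x) = (2 * x) powr (-\<alpha>) * L (2 * x)" using tail elim by auto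
    have "G x > 0" using Gx elim by simp
    moreover have "2 powr (-\<beta>) * G x \<le> G (2 * x)"
    proof -
      have "2 powr (-\<beta>) * G x \<le> 2 powr (-\<alpha>) * (L (2 * x) / L x) * G x"
        using elim(1) \<open>G x > 0\<close> by (intro mult_right_mono) auto
      also have "\<dots> = G (2 * x)" using elim Gx G2x by (simp add: powr_mult field_simps)
      finally show ?thesis .
    qed
    ultimately show ?case using elim by auto
  qed
  then obtain x0 where x0: "\<And>y. y \<ge> x0 \<Longrightarrow> y > 0 \<and> G y > 0 \<and> 2 powr (-\<beta>) * G y \<le> G (2 * y)"
    by (auto simp: eventually_at_top_linorder)
  define Kc where "Kc = (2::real) powr \<beta>"
  have step: "G y \<le> Kc * G (2 * y)" if "y \<ge> x0" for y
  proof -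
    have "2 powr (-\<beta>) * G y \<le> G (2 * y)" using x0[OF that] by auto
    then have "2 powr \<beta> * (2 powr (-\<beta>) * G y) \<le> 2 powr \<beta> * G (2 * y)" by (intro mult_left_mono) auto
    moreover have "2 powr \<beta> * (2 powr (-\<beta>) * G y) = G y"
      by (simp add: powr_minus)
    ultimately show ?thesis by (simp add: Kc_def)
  qed
  have iter: "G y \<le> Kc ^ i * G (2 ^ i * y)" if "y \<ge> x0" for i y
  proof (induction i)
    case 0 then show ?case by simp
  next
    case (Suc i)
    have "2 ^ i * y \<ge> x0"
    proof -
      have "y > 0" using x0 that by auto
      then have "y \<le> 2 ^ i * y" by (simp add: mult_le_cancel_right1)
      then show ?thesis using that by linarith
    qed
    then have "G (2 ^ i * y) \<le> Kc * G (2 * (2 ^ i * y))" by (rule step)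
    then have "Kc ^ i * G (2 ^ i * y) \<le> Kc ^ i * (Kc * G (2 * (2 ^ i * y)))"
      by (intro mult_left_mono) (auto simp: Kc_def)
    then show ?case using Suc by (simp add: mult_ac)
  qed
  have x0pos: "x0 > 0" and Gx0: "G x0 > 0" using x0[of x0] by auto
  define K where "K = 2 powr \<beta> * max 1 (1 / G x0)"
  have Kpos: "K > 0" unfolding K_def by simp
  have main: "G (\<delta> * x) \<le> K * \<delta> powr (-\<beta>) * G x" if x: "x \<ge> x0" and d: "0 < \<delta>" "\<delta> \<le> 1" for x \<delta>
  proof -
    have xpos: "x > 0" using x x0pos by auto
    have Gxnn: "G x \<ge> 0" using x0[OF x] by auto
    have key: "(2 ^ i) powr \<beta> \<le> 2 powr \<beta> * \<delta> powr (-\<beta>)" if "(2::real) ^ i < 2 / \<delta>" for i :: nat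
    proof -
      have "(2 ^ i) powr \<beta> \<le> (2 / \<delta>) powr \<beta>" using that ab by (intro powr_mono2) auto
      also have "\<dots> = 2 powr \<beta> * \<delta> powr (-\<beta>)" using d by (simp add: powr_divide powr_minus_divide)
      finally show ?thesis .
    qed
    show ?thesis
    proof (cases "\<delta> * x \<ge> x0")
      case True
      obtain i :: nat where i: "1 / \<delta> \<le> 2 ^ i" "2 ^ i < 2 * (1 / \<delta>)"
        using exists_pow2_between[of "1/\<delta>"] d by auto
      have "G (\<delta> * x) \<le> Kc ^ i * G (2 ^ i * (\<delta> * x))" by (rule iter[OF True])
      also have "\<dots> \<le> Kc ^ i * G x"
      proof -
        have "x \<le> 2 ^ i * (\<delta> * x)"
        proof -
          have "1 \<le> 2 ^ i * \<delta>" using i(1) d by (simp add: field_simps)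
          then have "1 * x \<le> (2 ^ i * \<delta>) * x" using xpos by (intro mult_right_mono) auto
          then show ?thesis by (simp add: mult_ac)
        qed
        then show ?thesis by (intro mult_left_mono anti) (auto simp: Kc_def)
      qed
      also have "\<dots> \<le> (2 powr \<beta> * \<delta> powr (-\<beta>)) * G x"
        using key[of i] i(2) Gxnn unfolding Kc_def pow_powr2 by (intro mult_right_mono) auto
      also have "\<dots> \<le> K * \<delta> powr (-\<beta>) * G x"
        unfolding K_def using Gxnn by (intro mult_right_mono) (auto simp: mult_ac)
      finally show ?thesis .
    next
      case False
      obtain i :: nat where i: "x / x0 \<le> 2 ^ i" "2 ^ i < 2 * (x / x0)"
        using exists_pow2_between[of "x / x0"] x x0pos by auto
      have "2 ^ i < 2 / \<delta>"
      proof -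
        have "x / x0 < 1 / \<delta>" using False d x0pos xpos by (simp add: field_simps)
        then show ?thesis using i(2) by linarith
      qed
      have "G x0 \<le> Kc ^ i * G (2 ^ i * x0)" by (rule iter) simp
      also have "\<dots> \<le> Kc ^ i * G x"
      proof -
        have "x \<le> 2 ^ i * x0" using i(1) x0pos by (simp add: field_simps)
        then show ?thesis by (intro mult_left_mono anti) (auto simp: Kc_def)
      qed
      also have "\<dots> \<le> (2 powr \<beta> * \<delta> powr (-\<beta>)) * G x"
        using key[OF \<open>2 ^ i < 2 / \<delta>\<close>] Gxnn unfolding Kc_def pow_powr2 by (intro mult_right_mono) auto
      finally have A: "G x0 \<le> 2 powr \<beta> * \<delta> powr (-\<beta>) * G x" .
      have "G (\<delta> * x) \<le> 1" by (rule G1)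
      also have "\<dots> \<le> (1 / G x0) * (2 powr \<beta> * \<delta> powr (-\<beta>) * G x)"
        using A Gx0 by (simp add: field_simps)
      also have "\<dots> \<le> K * \<delta> powr (-\<beta>) * G x"
      proof -
        have "0 \<le> 2 powr \<beta> * \<delta> powr (-\<beta>) * G x" using Gxnn by simp
        then have "(1 / G x0) * (2 powr \<beta> * \<delta> powr (-\<beta>) * G x) \<le> max 1 (1 / G x0) * (2 powr \<beta> * \<delta> powr (-\<beta>) * G x)"
          by (intro mult_right_mono) auto
        then show ?thesis unfolding K_def by (simp add: mult_ac)
      qed
      finally show ?thesis .
    qed
  qed
  show ?thesis using x0pos Kpos main by blast
qed



lemma seq_facts:
  fixes X :: "nat \<Rightarrow> 'a \<Rightarrow> real" and m :: "nat \<Rightarrow> nat" and a :: "nat \<Rightarrow> real"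
  assumes M: "prob_space M"
    and X1: "X 1 \<in> borel_measurable M"
    and p: "0 < p"
    and balance: "((\<lambda>x. measure M {\<omega> \<in> space M. X 1 \<omega> > x} /
                        measure M {\<omega> \<in> space M. \<bar>X 1 \<omega>\<bar> > x}) \<longlongrightarrow> p) at_top"
    and m_lim: "filterlim m at_top sequentially"
    and a_n: "(\<lambda>n. real (m n) * measure M {\<omega> \<in> space M. X 1 \<omega> > a n}) \<longlonglongrightarrow> 1"
  shows "filterlim a at_top sequentially"
    and "\<forall>\<^sub>F n in sequentially. real (m n) * measure M {\<omega> \<in> space M. \<bar>X 1 \<omega>\<bar> > a n} \<le> 4 / p"
proof -
  interpret prob_space M by (rule M)
  define G where "G t = measure M {\<omega> \<in> space M. \<bar>X 1 \<omega>\<bar> > t}" for t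
  define H where "H t = measure M {\<omega> \<in> space M. X 1 \<omega> > t}" for t
  have Hanti: "H y \<le> H x" if "x \<le> y" for x y
    unfolding H_def using that X1 by (intro finite_measure_mono) auto
  have "\<forall>\<^sub>F x in at_top. p / 2 < H x / G x"
    using balance p unfolding G_def H_def by (intro order_tendstoD(1)) auto
  then have ev: "\<forall>\<^sub>F x in at_top. G x > 0 \<and> H x > 0 \<and> G x \<le> (2 / p) * H x"
  proof eventually_elim
    case (elim x)
    have G0: "G x \<ge> 0" "H x \<ge> 0" unfolding G_def H_def by auto
    have "G x \<noteq> 0" using elim p by auto
    then have Gp: "G x > 0" using G0 by auto
    then have "p / 2 * G x < H x" using elim by (simp add: field_simps)
    moreover have "0 < p / 2 * G x" using Gp p by simp
    ultimately have "H x > 0" by linarith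
    moreover have "G x \<le> (2 / p) * H x"
    proof -
      have "(2 / p) * (p / 2 * G x) \<le> (2 / p) * H x"
        using \<open>p / 2 * G x < H x\<close> p by (intro mult_left_mono) auto
      moreover have "(2 / p) * (p / 2 * G x) = G x" using p by simp
      ultimately show ?thesis by simp
    qed
    ultimately show ?case using Gp by simp
  qed
  then obtain y1 where y1: "\<And>x. x \<ge> y1 \<Longrightarrow> G x > 0 \<and> H x > 0 \<and> G x \<le> (2 / p) * H x"
    by (auto simp: eventually_at_top_linorder)
  have mreal: "filterlim (\<lambda>n. real (m n)) at_top sequentially"
    by (rule filterlim_compose[OF filterlim_real_sequentially m_lim])
  have H0: "(\<lambda>n. H (a n)) \<longlonglongrightarrow> 0"
  proof -
    have "(\<lambda>n. real (m n) * H (a n) / real (m n)) \<longlonglongrightarrow> 0"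
      using a_n unfolding H_def
      by (intro tendsto_divide_0[OF _ filterlim_at_top_imp_at_infinity[OF mreal]]) 
    moreover have "\<forall>\<^sub>F n in sequentially. real (m n) * H (a n) / real (m n) = H (a n)"
    proof -
      have "\<forall>\<^sub>F n in sequentially. 1 \<le> real (m n)" using mreal[unfolded filterlim_at_top] by blast
      then show ?thesis by eventually_elim simp
    qed
    ultimately show ?thesis by (rule Lim_transform_eventually)
  qed
  show alim: "filterlim a at_top sequentially"
    unfolding filterlim_at_top
  proof
    fix Z
    define y where "y = max Z y1"
    have Hy: "H y > 0" using y1[of y] by (auto simp: y_def)
    have "\<forall>\<^sub>F n in sequentially. H (a n) < H y" using H0 Hy by (intro order_tendstoD(2)) auto
    then show "\<forall>\<^sub>F n in sequentially. Z \<le> a n"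
    proof eventually_elim
      case (elim n)
      have "\<not> a n \<le> y" using Hanti[of "a n" y] elim by auto
      then show ?case unfolding y_def by auto
    qed
  qed
  have e1: "\<forall>\<^sub>F n in sequentially. G (a n) \<le> (2 / p) * H (a n)"
  proof -
    have "\<forall>\<^sub>F n in sequentially. y1 \<le> a n" using alim[unfolded filterlim_at_top] by blast
    then show ?thesis by eventually_elim (use y1 in blast)
  qed
  have e2: "\<forall>\<^sub>F n in sequentially. real (m n) * H (a n) < 2"
    using a_n unfolding H_def by (intro order_tendstoD(2)) auto
  show "\<forall>\<^sub>F n in sequentially. real (m n) * measure M {\<omega> \<in> space M. \<bar>X 1 \<omega>\<bar> > a n} \<le> 4 / p"
    using e1 e2
  proof eventually_elim
    case (elim n)
    have "real (m n) * G (a n) \<le> real (m n) * ((2 / p) * H (a n))"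
      using elim(1) by (intro mult_left_mono) auto
    also have "\<dots> = (2 / p) * (real (m n) * H (a n))" by simp
    also have "\<dots> \<le> (2 / p) * 2" using elim(2) p by (intro mult_left_mono) auto
    finally show ?case unfolding G_def by simp
  qed
qed


theorem lemma3p8:
  fixes M :: "'a measure"
    and E :: "real set"
    and R :: "nat \<Rightarrow> nat \<Rightarrow> 'a \<Rightarrow> nat set"
    and X :: "nat \<Rightarrow> 'a \<Rightarrow> real"
    and L :: "real \<Rightarrow> real"
    and \<alpha> p c0 \<gamma> :: real
    and m :: "nat \<Rightarrow> nat"
    and a :: "nat \<Rightarrow> real"
  assumes M: "prob_space M"
    and E: "E \<subseteq> {0..1}" "finite ({0..1} - E)"
    \<comment> \<open>R n j, j >= 1: i.i.d. copies of the random set R_n, contained a.s. in {0..n}/n\<close>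
    and R_grid: "\<And>n j. j \<ge> 1 \<Longrightarrow> AE \<omega> in M. R n j \<omega> \<subseteq> {..n}"
    and R_indep: "\<And>n. prob_space.indep_vars M (\<lambda>_. set_space) (R n) {1..}"
    and R_ident: "\<And>n j. j \<ge> 1 \<Longrightarrow> distr M set_space (R n j) = distr M set_space (R n 1)"
    and c0: "c0 > 0"
    and R_small: "\<And>a' b'. {a'..b'} \<subseteq> E \<Longrightarrow> \<exists>C. \<forall>n\<ge>1. \<forall>k\<le>n. real k / real n \<in> {a'..b'} \<longrightarrow>
                   measure M {\<omega> \<in> space M. k \<in> R n 1 \<omega>} \<le> C * real n powr (- c0)"
    \<comment> \<open>X j, j >= 1: i.i.d., and the family X independent of the whole family R\<close>
    and X_indep: "prob_space.indep_vars M (\<lambda>_. borel) X {1..}"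
    and X_ident: "\<And>j. j \<ge> 1 \<Longrightarrow> distr M borel (X j) = distr M borel (X 1)"
    and XR_indep: "prob_space.indep_set M
        (sigma_sets (space M) (\<Union>j\<in>{1..}. {X j -` A \<inter> space M | A. A \<in> sets borel}))
        (sigma_sets (space M) (\<Union>n. \<Union>j\<in>{1..}. {R n j -` A \<inter> space M | A. A \<in> sets set_space}))"
    and alpha: "\<alpha> > 0"
    and tail: "\<And>x. x > 0 \<Longrightarrow> measure M {\<omega> \<in> space M. \<bar>X 1 \<omega>\<bar> > x} = x powr (- \<alpha>) * L x"
    and L: "slowly_varying L"
    and p: "0 < p" "p \<le> 1"
    and balance: "((\<lambda>x. measure M {\<omega> \<in> space M. X 1 \<omega> > x} /
                        measure M {\<omega> \<in> space M. \<bar>X 1 \<omega>\<bar> > x}) \<longlongrightarrow> p) at_top"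
    and m_mono: "mono m" and m_pos: "\<And>n. m n > 0" and m_lim: "filterlim m at_top sequentially"
    and a_n: "(\<lambda>n. real (m n) * measure M {\<omega> \<in> space M. X 1 \<omega> > a n}) \<longlonglongrightarrow> 1"
    and gamma: "0 < \<gamma>" "\<gamma> < c0 / \<alpha>"
  shows "\<forall>\<epsilon>>0. \<forall>a' b'. {a'..b'} \<subseteq> E \<longrightarrow>
    ((\<lambda>l. limsup (\<lambda>n. ereal (measure M {\<omega> \<in> space M.
         Max ({\<bar>Zsum X R m a \<gamma> n l k \<omega>\<bar> | k. k \<le> n \<and> real k / real n \<in> {a'..b'}} \<union> {0}) / a n > \<epsilon>})))
      \<longlonglongrightarrow> 0)"
proof (intro allI impI)
  fix \<epsilon> :: real and a' b' :: real
  assume eps: "\<epsilon> > 0" and G0: "{a'..b'} \<subseteq> E"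
  interpret prob_space M by (rule M)
  obtain C where C: "\<forall>n\<ge>1. \<forall>k\<le>n. real k / real n \<in> {a'..b'} \<longrightarrow>
                   measure M {\<omega> \<in> space M. k \<in> R n 1 \<omega>} \<le> C * real n powr (- c0)"
    using R_small[OF G0] by blast
  define C' where "C' = max C 0"
  have Xm: "X j \<in> borel_measurable M" if "j \<ge> 1" for j
    using X_indep that by (auto simp: indep_vars_def)
  have Rm: "R n j \<in> measurable M set_space" if "j \<ge> 1" for n j
    using R_indep[of n] that by (auto simp: indep_vars_def)
  define G where "G t = measure M {\<omega>\<in>space M. t < \<bar>X 1 \<omega>\<bar>}" for t
  have Ganti: "G y \<le> G x" if "x \<le> y" for x y
    unfolding G_def using that Xm[OF order_refl] by (intro finite_measure_mono) auto
  have G1: "G x \<le> 1" for x unfolding G_def by simp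
  have Gnn: "G x \<ge> 0" for x unfolding G_def by simp
  have tailG: "G x = x powr (- \<alpha>) * L x" if "x > 0" for x using tail[OF that] by (simp add: G_def)
  define \<beta> where "\<beta> = (\<alpha> + c0 / \<gamma>) / 2"
  have acg: "\<alpha> < c0 / \<gamma>"
  proof -
    have "\<gamma> * \<alpha> < c0" using gamma alpha by (simp add: field_simps)
    then show ?thesis using gamma by (simp add: field_simps)
  qed
  have ab: "\<alpha> < \<beta>" using acg unfolding \<beta>_def by simp
  have gb: "\<gamma> * \<beta> < c0"
  proof -
    have h: "\<And>u v::real. u < v \<Longrightarrow> (u + v) / 2 < v" by simp
    have "\<beta> < c0 / \<gamma>" using h[OF acg] unfolding \<beta>_def .
    then show ?thesis using gamma by (simp add: field_simps)
  qed
  have bpos: "\<beta> > 0" using ab alpha by simp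
  obtain K x0 where K: "x0 > 0" "K > 0"
    and pot: "\<And>x \<delta>. x \<ge> x0 \<Longrightarrow> 0 < \<delta> \<Longrightarrow> \<delta> \<le> 1 \<Longrightarrow> G (\<delta> * x) \<le> K * \<delta> powr (-\<beta>) * G x"
    using potter[OF Ganti G1 tailG L ab alpha] by blast
  note SF = seq_facts[where X=X and m=m and a=a, OF M Xm[OF order_refl] p(1) balance m_lim a_n]
  define B where "B = 4 / p"
  have Bpos: "B > 0" using p unfolding B_def by simp
  define s0 where "s0 = c0 - \<gamma> * \<beta>"
  have s0: "s0 > 0" using gb unfolding s0_def by simp
  define r :: nat where "r = nat \<lceil>2 / s0\<rceil> + 1"
  have r1: "r \<ge> 1" unfolding r_def by simp
  have rs: "real r * s0 > 1"
  proof -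
    have "2 / s0 \<le> real (nat \<lceil>2 / s0\<rceil>)" by linarith
    then have "2 / s0 + 1 \<le> real r" unfolding r_def by simp
    then have "(2 / s0 + 1) * s0 \<le> real r * s0" using s0 by (intro mult_right_mono) auto
    moreover have "(2 / s0 + 1) * s0 = 2 + s0" using s0 by (simp add: field_simps)
    ultimately show ?thesis using s0 by linarith
  qed
  define c where "c = min (\<epsilon> / real r) 1"
  have c: "0 < c" "c \<le> 1" using eps r1 unfolding c_def by auto
  have rc: "(real r - 1) * c < \<epsilon>"
  proof -
    have "(real r - 1) * c \<le> (real r - 1) * (\<epsilon> / real r)" using r1 unfolding c_def
      by (intro mult_left_mono) auto
    also have "\<dots> < \<epsilon>" using r1 eps by (simp add: field_simps)
    finally show ?thesis .
  qed
  define \<Lambda> where "\<Lambda> = B * K * c powr (-\<beta>)"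
  have Lnn: "\<Lambda> \<ge> 0" unfolding \<Lambda>_def using Bpos K by simp
  define D where "D = (B * K * C') ^ r"
  define P where "P l n = measure M {\<omega> \<in> space M.
         Max ({\<bar>Zsum X R m a \<gamma> n l k \<omega>\<bar> | k. k \<le> n \<and> real k / real n \<in> {a'..b'}} \<union> {0}) / a n > \<epsilon>}" for l n
  have bound: "\<forall>\<^sub>F n in sequentially. P l n \<le> \<Lambda> ^ Suc l / fact (Suc l) + real (n + 1) * D * real n powr (-(real r * s0))" for l
  proof -
    have "\<forall>\<^sub>F n in sequentially. x0 \<le> a n" using SF(1) unfolding filterlim_at_top by blast
    with SF(2) eventually_ge_at_top[of 1]
    show ?thesis
    proof eventually_elim
      case (elim n)
      have mG: "real (m n) * G (a n) \<le> B" using elim(1) unfolding B_def G_def by simp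
      have n1: "n \<ge> 1" using elim(2) by simp
      have ax0: "x0 \<le> a n" using elim(3) .
      have an: "a n > 0" using ax0 K(1) by linarith
      define I where "I = {1..m n}"
      have finI: "finite I" and I1: "I \<subseteq> {1..}" and cardI: "card I = m n" unfolding I_def by auto
      define da where "da = real n powr (-\<gamma>) * a n"
      define AX where "AX t i = {\<omega>\<in>space M. t < \<bar>X i \<omega>\<bar>}" for t i
      define AR where "AR k i = {\<omega>\<in>space M. k \<in> R n i \<omega>}" for k i
      have measAX: "AX t i \<in> sets M" if "i \<in> I" for t i
      proof -
        have [measurable]: "X i \<in> borel_measurable M" using Xm[of i] that I1 by auto
        show ?thesis unfolding AX_def by measurable
      qed
      have measAR: "AR k i \<in> sets M" if "i \<in> I" for k i
      proof -
        have "AR k i = R n i -` {A. k \<in> A} \<inter> space M" unfolding AR_def by auto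
        moreover have "R n i \<in> measurable M set_space" using Rm[of i n] that I1 by auto
        ultimately show ?thesis using measurable_sets[OF _ set_space_pt] by metis
      qed
      define Aset where "Aset = (\<Union>S\<in>{S. S \<subseteq> I \<and> card S = Suc l}. \<Inter>i\<in>S. AX (c * a n) i)"
      define Bset where "Bset k = (\<Union>S\<in>{S. S \<subseteq> I \<and> card S = r}. \<Inter>i\<in>S. AX da i \<inter> AR k i)" for k
      define Ks where "Ks = {k. k \<le> n \<and> real k / real n \<in> {a'..b'}}"
      have Ksn: "Ks \<subseteq> {..n}" unfolding Ks_def by auto
      have finKs: "finite Ks" by (rule finite_subset[OF Ksn]) simp
      have cardKs: "card Ks \<le> n + 1"
      proof -
        have "card Ks \<le> card {..n}" by (rule card_mono[OF _ Ksn]) simp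
        then show ?thesis by simp
      qed
      note UA = subsets_union_bound[OF M finI, of "Suc l" "AX (c * a n)" "G (c * a n) ^ Suc l"]
      have UA1: "measure M Aset \<le> real (m n choose Suc l) * G (c * a n) ^ Suc l"
        and UA2: "Aset \<in> sets M"
      proof -
        have pr: "measure M (\<Inter>i\<in>S. AX (c * a n) i) \<le> G (c * a n) ^ Suc l"
          if "S \<subseteq> I" "card S = Suc l" for S
        proof -
          have "finite S" "S \<noteq> {}" using that finI finite_subset by fastforce+
          then show ?thesis unfolding AX_def G_def
            using X_prod[OF M X_indep X_ident, of S "c * a n"] that I1 by auto
        qed
        have q1: "1 \<le> Suc l" by simp
        show "measure M Aset \<le> real (m n choose Suc l) * G (c * a n) ^ Suc l"
          using UA(1)[OF q1 measAX pr] unfolding Aset_def cardI .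
        show "Aset \<in> sets M" using UA(2)[OF q1 measAX pr] unfolding Aset_def .
      qed
      have chooseb: "real (N choose q) * x ^ q \<le> (real N * x) ^ q / fact q" if "x \<ge> 0" for N q x
      proof -
        have "(N choose q) * fact q \<le> N ^ q" by (rule binomial_fact_pow)
        then have "real ((N choose q) * fact q) \<le> real (N ^ q)" by (simp only: of_nat_le_iff)
        then have "real (N choose q) * fact q \<le> real N ^ q" by simp
        then have "real (N choose q) * fact q * x ^ q \<le> real N ^ q * x ^ q"
          using that by (intro mult_right_mono) auto
        moreover have "real N ^ q * x ^ q = (real N * x) ^ q" by (simp add: power_mult_distrib)
        ultimately have "real (N choose q) * x ^ q * fact q \<le> (real N * x) ^ q" by (simp add: mult_ac)
        then show ?thesis by (simp add: pos_le_divide_eq)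
      qed
      have mGc: "real (m n) * G (c * a n) \<le> \<Lambda>"
      proof -
        have "G (c * a n) \<le> K * c powr (-\<beta>) * G (a n)" using pot[OF ax0 c] .
        then have "real (m n) * G (c * a n) \<le> real (m n) * (K * c powr (-\<beta>) * G (a n))"
          by (intro mult_left_mono) auto
        also have "\<dots> = K * c powr (-\<beta>) * (real (m n) * G (a n))" by simp
        also have "\<dots> \<le> K * c powr (-\<beta>) * B" using mG K by (intro mult_left_mono) auto
        finally show ?thesis unfolding \<Lambda>_def by (simp add: mult_ac)
      qed
      have PA: "measure M Aset \<le> \<Lambda> ^ Suc l / fact (Suc l)"
      proof -
        have "measure M Aset \<le> (real (m n) * G (c * a n)) ^ Suc l / fact (Suc l)"
          using UA1 chooseb[OF Gnn, of "m n" "Suc l" "c * a n"] by linarith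
        also have "\<dots> \<le> \<Lambda> ^ Suc l / fact (Suc l)"
          using mGc Gnn by (intro divide_right_mono power_mono) auto
        finally show ?thesis .
      qed
      have dpos: "0 < real n powr (-\<gamma>)" "real n powr (-\<gamma>) \<le> 1"
      proof -
        show "0 < real n powr (-\<gamma>)" using n1 by simp
        have "1 \<le> real n powr \<gamma>" using n1 gamma by (intro ge_one_powr_ge_zero) auto
        then have "1 / real n powr \<gamma> \<le> 1" by (simp add: divide_le_eq)
        then show "real n powr (-\<gamma>) \<le> 1" by (simp add: powr_minus_divide)
      qed
      have mGd: "real (m n) * G da \<le> B * K * real n powr (\<gamma> * \<beta>)"
      proof -
        have "G da \<le> K * (real n powr (-\<gamma>)) powr (-\<beta>) * G (a n)" unfolding da_def using pot[OF ax0 dpos] .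
        also have "(real n powr (-\<gamma>)) powr (-\<beta>) = real n powr (\<gamma> * \<beta>)" by (simp add: powr_powr)
        finally have "real (m n) * G da \<le> real (m n) * (K * real n powr (\<gamma> * \<beta>) * G (a n))"
          by (intro mult_left_mono) auto
        also have "\<dots> = K * real n powr (\<gamma> * \<beta>) * (real (m n) * G (a n))" by simp
        also have "\<dots> \<le> K * real n powr (\<gamma> * \<beta>) * B" using mG K by (intro mult_left_mono) auto
        finally show ?thesis by (simp add: mult_ac)
      qed
      have PB: "measure M (Bset k) \<le> D * real n powr (-(real r * s0))" and measB: "Bset k \<in> sets M"
        if k: "k \<in> Ks" for k
      proof -
        define pk where "pk = measure M {\<omega>\<in>space M. k \<in> R n 1 \<omega>}"
        have pk: "pk \<le> C' * real n powr (-c0)" "0 \<le> pk"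
        proof -
          have kk: "k \<le> n" "real k / real n \<in> {a'..b'}" using k unfolding Ks_def by auto
          have "pk \<le> C * real n powr (-c0)" unfolding pk_def using C n1 kk by blast
          also have "\<dots> \<le> C' * real n powr (-c0)" unfolding C'_def by (intro mult_right_mono) auto
          finally show "pk \<le> C' * real n powr (-c0)" .
        qed (simp add: pk_def)
        note UB = subsets_union_bound[OF M finI r1, of "\<lambda>i. AX da i \<inter> AR k i" "(G da * pk) ^ r"]
        have measi: "AX da i \<inter> AR k i \<in> sets M" if "i \<in> I" for i using measAX measAR that by auto
        have pr: "measure M (\<Inter>i\<in>S. AX da i \<inter> AR k i) \<le> (G da * pk) ^ r"
          if "S \<subseteq> I" "card S = r" for S
        proof -
          have "finite S" "S \<noteq> {}" using that finI finite_subset r1 by fastforce+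
          then show ?thesis unfolding AX_def AR_def G_def pk_def
            using XR_prod[where R=R and n=n, OF M X_indep X_ident R_indep R_ident XR_indep, of S da k] that I1 by auto
        qed
        show "Bset k \<in> sets M" using UB(2)[OF measi pr] unfolding Bset_def .
        have "measure M (Bset k) \<le> real (m n choose r) * (G da * pk) ^ r"
          using UB(1)[OF measi pr] unfolding Bset_def cardI .
        also have "\<dots> \<le> (real (m n) * (G da * pk)) ^ r / fact r"
          using chooseb[OF mult_nonneg_nonneg[OF Gnn pk(2)], of "m n" r] .
        also have "\<dots> \<le> (real (m n) * (G da * pk)) ^ r"
        proof -
          have "0 \<le> (real (m n) * (G da * pk)) ^ r" using Gnn pk by simp
          moreover have "(1::real) \<le> fact r" by simp
          ultimately have "(real (m n) * (G da * pk)) ^ r * 1 \<le> (real (m n) * (G da * pk)) ^ r * fact r"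
            by (intro mult_left_mono) auto
          then show ?thesis by (simp add: pos_divide_le_eq)
        qed
        also have "\<dots> \<le> (B * K * real n powr (\<gamma> * \<beta>) * (C' * real n powr (-c0))) ^ r"
        proof (intro power_mono)
          have "real (m n) * (G da * pk) = (real (m n) * G da) * pk" by simp
          also have "\<dots> \<le> (B * K * real n powr (\<gamma> * \<beta>)) * (C' * real n powr (-c0))"
            by (rule mult_mono[OF mGd pk(1)]) (use Bpos K pk in auto)
          finally show "real (m n) * (G da * pk) \<le> (B * K * real n powr (\<gamma> * \<beta>)) * (C' * real n powr (-c0))" .
          show "0 \<le> real (m n) * (G da * pk)" using Gnn pk by auto
        qed
        also have "\<dots> = D * real n powr (-(real r * s0))"
        proof -
          have e1: "B * K * real n powr (\<gamma> * \<beta>) * (C' * real n powr (-c0)) = (B * K * C') * real n powr (\<gamma> * \<beta> - c0)"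
            by (simp add: powr_diff powr_minus divide_inverse mult_ac)
          have e2: "(real n powr (\<gamma> * \<beta> - c0)) ^ r = real n powr (-(real r * s0))"
            using n1 by (simp add: powr_power s0_def algebra_simps)
          have e3: "((B * K * C') * real n powr (\<gamma> * \<beta> - c0)) ^ r = (B * K * C') ^ r * (real n powr (\<gamma> * \<beta> - c0)) ^ r"
            by (rule power_mult_distrib)
          show ?thesis unfolding e1 e3 e2 D_def by (rule refl)
        qed
        finally show "measure M (Bset k) \<le> D * real n powr (-(real r * s0))" .
      qed
      have incl: "{\<omega> \<in> space M.
         Max ({\<bar>Zsum X R m a \<gamma> n l k \<omega>\<bar> | k. k \<le> n \<and> real k / real n \<in> {a'..b'}} \<union> {0}) / a n > \<epsilon>}
         \<subseteq> Aset \<union> (\<Union>k\<in>Ks. Bset k)"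
      proof
        fix \<omega> assume w: "\<omega> \<in> {\<omega> \<in> space M.
         Max ({\<bar>Zsum X R m a \<gamma> n l k \<omega>\<bar> | k. k \<le> n \<and> real k / real n \<in> {a'..b'}} \<union> {0}) / a n > \<epsilon>}"
        define SS where "SS = {\<bar>Zsum X R m a \<gamma> n l k \<omega>\<bar> | k. k \<le> n \<and> real k / real n \<in> {a'..b'}} \<union> {0}"
        have wM: "\<omega> \<in> space M" and big: "Max SS / a n > \<epsilon>" using w unfolding SS_def by auto
        show "\<omega> \<in> Aset \<union> (\<Union>k\<in>Ks. Bset k)"
        proof (rule ccontr)
          assume nin: "\<omega> \<notin> Aset \<union> (\<Union>k\<in>Ks. Bset k)"
          have hA: "card {i\<in>{1..m n}. c * a n < \<bar>X i \<omega>\<bar>} \<le> l"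
          proof (rule ccontr)
            assume "\<not> ?thesis"
            moreover have "{i\<in>{1..m n}. c * a n < \<bar>X i \<omega>\<bar>} = {i\<in>I. \<omega> \<in> AX (c * a n) i}"
              using wM unfolding AX_def I_def by auto
            ultimately have "Suc l \<le> card {i\<in>I. \<omega> \<in> AX (c * a n) i}" by simp
            then have "\<omega> \<in> Aset" unfolding Aset_def by (rule in_subsets_union[OF finI]) simp
            then show False using nin by auto
          qed
          have hB: "card {i\<in>{1..m n}. \<bar>X i \<omega>\<bar> / a n > real n powr (-\<gamma>) \<and> k \<in> R n i \<omega>} \<le> r - 1"
            if k: "k \<in> Ks" for k
          proof (rule ccontr)
            assume "\<not> ?thesis"
            then have "r \<le> card {i\<in>{1..m n}. \<bar>X i \<omega>\<bar> / a n > real n powr (-\<gamma>) \<and> k \<in> R n i \<omega>}" by simp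
            moreover have "{i\<in>{1..m n}. \<bar>X i \<omega>\<bar> / a n > real n powr (-\<gamma>) \<and> k \<in> R n i \<omega>} = {i\<in>I. \<omega> \<in> AX da i \<inter> AR k i}"
              using wM an unfolding AX_def AR_def I_def da_def by (auto simp: pos_less_divide_eq)
            ultimately have "r \<le> card {i\<in>I. \<omega> \<in> AX da i \<inter> AR k i}" by simp
            then have "\<omega> \<in> Bset k" unfolding Bset_def by (rule in_subsets_union[OF finI _ r1])
            then show False using nin k by auto
          qed
          have Zb: "\<bar>Zsum X R m a \<gamma> n l k \<omega>\<bar> \<le> real (r - 1) * (c * a n)" if "k \<in> Ks" for k
            using Zsum_bound[where X=X and R=R and m=m and a=a and \<gamma>=\<gamma> and n=n and l=l and k=k and \<omega>=\<omega> and c=c and r="r - 1", OF an _ hA hB[OF that]] c by auto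
          have finSS: "finite SS" unfolding SS_def using finKs unfolding Ks_def by (auto intro: finite_image_set)
          have SSb: "x \<le> real (r - 1) * (c * a n)" if "x \<in> SS" for x
            using that Zb c an unfolding SS_def Ks_def by auto
          have "Max SS \<le> real (r - 1) * (c * a n)"
            using finSS SSb by (subst Max_le_iff) (auto simp: SS_def)
          then have "Max SS / a n \<le> real (r - 1) * c" using an by (simp add: pos_divide_le_eq mult_ac)
          moreover have "real (r - 1) = real r - 1" using r1 by (simp add: of_nat_diff)
          ultimately have "Max SS / a n \<le> (real r - 1) * c" by simp
          then show False using big rc by linarith
        qed
      qed
      have measU: "(\<Union>k\<in>Ks. Bset k) \<in> sets M" using measB finKs by (intro sets.finite_UN) auto
      have P1: "P l n \<le> measure M (Aset \<union> (\<Union>k\<in>Ks. Bset k))"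
        unfolding P_def by (rule finite_measure_mono[OF incl]) (use UA2 measU in auto)
      have P2: "measure M (Aset \<union> (\<Union>k\<in>Ks. Bset k)) \<le> measure M Aset + measure M (\<Union>k\<in>Ks. Bset k)"
        by (rule measure_Un_le[OF UA2 measU])
      have "measure M (\<Union>k\<in>Ks. Bset k) \<le> (\<Sum>k\<in>Ks. measure M (Bset k))"
        using measB finKs by (intro finite_measure_subadditive_finite) auto
      also have "\<dots> \<le> (\<Sum>k\<in>Ks. D * real n powr (-(real r * s0)))"
        using PB by (intro sum_mono) auto
      also have "\<dots> = real (card Ks) * (D * real n powr (-(real r * s0)))" by simp
      also have "\<dots> \<le> real (n + 1) * (D * real n powr (-(real r * s0)))"
      proof (intro mult_right_mono)
        show "real (card Ks) \<le> real (n + 1)" using cardKs by linarith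
        show "0 \<le> D * real n powr (-(real r * s0))" unfolding D_def C'_def using Bpos K by auto
      qed
      also have "\<dots> = real (n + 1) * D * real n powr (-(real r * s0))" by (simp only: mult.assoc)
      finally have P3: "measure M (\<Union>k\<in>Ks. Bset k) \<le> real (n + 1) * D * real n powr (-(real r * s0))" .
      show ?case using P1 P2 P3 PA by linarith
    qed
  qed
  have lim2: "(\<lambda>n. real (n + 1) * D * real n powr (-(real r * s0))) \<longlonglongrightarrow> 0"
  proof -
    define t where "t = real r * s0"
    have "(\<lambda>n. D * (real n powr (1 - t) + real n powr (- t))) \<longlonglongrightarrow> D * (0 + 0)"
      using rs unfolding t_def
      by (intro tendsto_intros tendsto_neg_powr[OF _ filterlim_real_sequentially]) auto
    moreover have "\<forall>\<^sub>F n in sequentially. D * (real n powr (1 - t) + real n powr (- t)) = real (n + 1) * D * real n powr (-(real r * s0))"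
      using eventually_ge_at_top[of "1::nat"]
    proof eventually_elim
      case (elim n)
      have "real n powr (1 - t) = real n * real n powr (- t)"
      proof -
        have "real n powr (1 + (- t)) = real n powr 1 * real n powr (- t)"
          by (rule powr_add)
        then show ?thesis using elim by simp
      qed
      then show ?case unfolding t_def by (simp add: algebra_simps)
    qed
    ultimately show ?thesis by (simp add: Lim_transform_eventually)
  qed
  have upper: "limsup (\<lambda>n. ereal (P l n)) \<le> ereal (\<Lambda> ^ Suc l / fact (Suc l))" for l
  proof -
    have "limsup (\<lambda>n. ereal (P l n)) \<le> limsup (\<lambda>n. ereal (\<Lambda> ^ Suc l / fact (Suc l) + real (n + 1) * D * real n powr (-(real r * s0))))"
      using bound[of l] by (intro Limsup_mono) (auto elim: eventually_mono)
    also have "\<dots> = ereal (\<Lambda> ^ Suc l / fact (Suc l) + 0)"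
      by (intro lim_imp_Limsup tendsto_ereal tendsto_add tendsto_const lim2) simp
    finally show ?thesis by simp
  qed
  have lower: "0 \<le> limsup (\<lambda>n. ereal (P l n))" for l
    by (intro le_Limsup) (auto simp: P_def)
  have fact0: "(\<lambda>l. \<Lambda> ^ Suc l / fact (Suc l)) \<longlonglongrightarrow> 0"
  proof -
    have "(\<lambda>l. inverse (fact l) * \<Lambda> ^ l) \<longlonglongrightarrow> 0"
      by (rule summable_LIMSEQ_zero[OF summable_exp])
    then have "(\<lambda>l. inverse (fact (Suc l)) * \<Lambda> ^ Suc l) \<longlonglongrightarrow> 0" by (rule LIMSEQ_Suc)
    then show ?thesis by (simp add: divide_inverse mult.commute)
  qed
  have "(\<lambda>l. limsup (\<lambda>n. ereal (P l n))) \<longlonglongrightarrow> 0"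
  proof (rule tendsto_sandwich[of "\<lambda>_. 0" _ _ "\<lambda>l. ereal (\<Lambda> ^ Suc l / fact (Suc l))"])
    show "\<forall>\<^sub>F l in sequentially. 0 \<le> limsup (\<lambda>n. ereal (P l n))" using lower by simp
    show "\<forall>\<^sub>F l in sequentially. limsup (\<lambda>n. ereal (P l n)) \<le> ereal (\<Lambda> ^ Suc l / fact (Suc l))"
      using upper by simp
    show "(\<lambda>_. 0 :: ereal) \<longlonglongrightarrow> 0" by simp
    show "(\<lambda>l. ereal (\<Lambda> ^ Suc l / fact (Suc l))) \<longlonglongrightarrow> 0"
      using tendsto_ereal[OF fact0] by (simp add: zero_ereal_def)
  qed
  then show "(\<lambda>l. limsup (\<lambda>n. ereal (measure M {\<omega> \<in> space M.
         Max ({\<bar>Zsum X R m a \<gamma> n l k \<omega>\<bar> | k. k \<le> n \<and> real k / real n \<in> {a'..b'}} \<union> {0}) / a n > \<epsilon>})))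
      \<longlonglongrightarrow> 0" by (simp add: P_def)
qed

end
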